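(* $I_2(4,v)=o(v^2)$ as $v\to\infty$; that is, for every $\epsilon>0$ there exists $v_0$ such that $I_2(4,v)<\epsilon v^2$ for all $v>v_0$.
   Context: A $(w,v)$ set system is a pair $(\mathcal{X},\mathcal{B})$ with $|\mathcal{X}|=v$ and $\mathcal{B}\subseteq\binom{\mathcal{X}}{w}$ (the family of all $w$-element subsets of $\mathcal{X}$); elements of $\mathcal{B}$ are blocks. For a $w$-subset $T\subseteq\mathcal{X}$ let $P_t(T)=\{\mathcal{P}\subseteq\mathcal{B}: |\mathcal{P}|\le t,\ T\subseteq\bigcup_{B\in\mathcal{P}}B\}$. The set system is a $t$-IPPS$(w,v)$ if for every $w$-subset $T\subseteq\mathcal{X}$, either $P_t(T)=\emptyset$ or $\bigcap_{\mathcal{P}\in P_t(T)}\mathcal{P}\neq\emptyset$. $I_t(w,v)$ denotes the maximum of $|\mathcal{B}|$ over all $t$-IPPS$(w,v)$. *)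

theory Defs
  imports Complex_Main
begin

definition covering_families :: "nat \<Rightarrow> 'a set set \<Rightarrow> 'a set \<Rightarrow> 'a set set set" where
  "covering_families t \<B> T = {\<P>. \<P> \<subseteq> \<B> \<and> card \<P> \<le> t \<and> T \<subseteq> \<Union>\<P>}"

definition is_IPPS :: "nat \<Rightarrow> nat \<Rightarrow> 'a set \<Rightarrow> 'a set set \<Rightarrow> bool" where
  "is_IPPS t w X \<B> \<longleftrightarrow>
     \<B> \<subseteq> {B. B \<subseteq> X \<and> card B = w} \<and>
     (\<forall>T. T \<subseteq> X \<and> card T = w \<longrightarrow>
        covering_families t \<B> T = {} \<or> \<Inter>(covering_families t \<B> T) \<noteq> {})"

text \<open>I_t(w,v): ground set taken w.l.o.g. to be {0..<v}.\<close>
definition I_IPPS :: "nat \<Rightarrow> nat \<Rightarrow> nat \<Rightarrow> nat" where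
  "I_IPPS t w v = Max {card \<B> | \<B> :: nat set set. is_IPPS t w {..<v} \<B>}"

end

theory Submission
  imports Defs "HOL-Analysis.Convex"
begin



definition adj :: "nat set set \<Rightarrow> nat \<Rightarrow> nat \<Rightarrow> real" where
  "adj B x y = of_bool (x \<noteq> y \<and> (\<exists>b\<in>B. x \<in> b \<and> y \<in> b))"
definition ind :: "nat set \<Rightarrow> nat \<Rightarrow> real" where
  "ind b x = of_bool (x \<in> b)"

lemma cycle:
  assumes ip: "is_IPPS 2 4 X B" and xz: "x \<noteq> z" and yw: "y \<noteq> w"
    and xy: "x \<noteq> y" and yz: "y \<noteq> z" and zw: "z \<noteq> w" and wx: "w \<noteq> x"
    and b1: "b1 \<in> B" "x \<in> b1" "y \<in> b1"
    and b2: "b2 \<in> B" "y \<in> b2" "z \<in> b2"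
    and b3: "b3 \<in> B" "z \<in> b3" "w \<in> b3"
    and b4: "b4 \<in> B" "w \<in> b4" "x \<in> b4"
  shows "\<exists>b\<in>B. (w \<in> b \<and> x \<in> b \<and> y \<in> b) \<or> (x \<in> b \<and> y \<in> b \<and> z \<in> b)
               \<or> (y \<in> b \<and> z \<in> b \<and> w \<in> b) \<or> (z \<in> b \<and> w \<in> b \<and> x \<in> b)"
proof -
  let ?T = "{x,y,z,w}"
  have sub: "B \<subseteq> {B. B \<subseteq> X \<and> card B = 4}" and cond: "\<forall>T. T \<subseteq> X \<and> card T = 4 \<longrightarrow>
        covering_families 2 B T = {} \<or> \<Inter>(covering_families 2 B T) \<noteq> {}"
    using ip unfolding is_IPPS_def by auto
  have "?T \<subseteq> X" using sub b1 b3 by blast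
  moreover have "card ?T = 4" using xz yw xy yz zw wx by auto
  ultimately have c: "covering_families 2 B ?T = {} \<or> \<Inter>(covering_families 2 B ?T) \<noteq> {}"
    using cond by blast
  have p1: "{b1,b3} \<in> covering_families 2 B ?T"
    unfolding covering_families_def using b1 b3 by (auto simp: card_insert_if)
  have p2: "{b2,b4} \<in> covering_families 2 B ?T"
    unfolding covering_families_def using b2 b4 by (auto simp: card_insert_if)
  from c p1 obtain b where "b \<in> \<Inter>(covering_families 2 B ?T)" by blast
  then have "b \<in> {b1,b3}" "b \<in> {b2,b4}" using p1 p2 by blast+
  then show ?thesis using b1 b2 b3 b4 by auto
qed

lemma private_pair:
  assumes ip: "is_IPPS 2 4 X B" and bB: "b \<in> B"
  shows "\<exists>x y. x \<in> b \<and> y \<in> b \<and> x \<noteq> y \<and> (\<forall>b'\<in>B. x \<in> b' \<and> y \<in> b' \<longrightarrow> b' = b)"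
proof (rule ccontr)
  assume nc: "\<not> ?thesis"
  have sub: "B \<subseteq> {B. B \<subseteq> X \<and> card B = 4}" and cond: "\<forall>T. T \<subseteq> X \<and> card T = 4 \<longrightarrow>
        covering_families 2 B T = {} \<or> \<Inter>(covering_families 2 B T) \<noteq> {}"
    using ip unfolding is_IPPS_def by auto
  have cb: "card b = 4" "b \<subseteq> X" using sub bB by auto
  then have "b \<noteq> {}" by auto
  then obtain a where a: "a \<in> b" by blast
  have "card (b - {a}) = 3" using cb a by (simp add: card_Diff_singleton)
  then have "b - {a} \<noteq> {}" by (metis card.empty zero_neq_numeral)
  then obtain a' where a': "a' \<in> b" "a' \<noteq> a" by blast
  have "card (b - {a,a'}) = 2" using cb a a' by (simp add: card_Diff_subset)
  then obtain c d where cd: "b - {a,a'} = {c,d}" "c \<noteq> d" by (auto simp: card_2_iff)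
  have beq: "b = {a,a',c,d}" using cd a a' by blast
  from nc obtain b1 where b1: "b1 \<in> B" "a \<in> b1" "a' \<in> b1" "b1 \<noteq> b" using a a' by blast
  from nc obtain b2 where b2: "b2 \<in> B" "c \<in> b2" "d \<in> b2" "b2 \<noteq> b" using cd by blast
  have c: "covering_families 2 B b = {} \<or> \<Inter>(covering_families 2 B b) \<noteq> {}"
    using cond cb by blast
  have p1: "{b} \<in> covering_families 2 B b"
    unfolding covering_families_def using bB by auto
  have p2: "{b1,b2} \<in> covering_families 2 B b"
    unfolding covering_families_def using b1 b2 beq by (auto simp: card_insert_if)
  from c p1 obtain e where "e \<in> \<Inter>(covering_families 2 B b)" by blast
  then have "e \<in> {b}" "e \<in> {b1,b2}" using p1 p2 by blast+
  then show False using b1 b2 by auto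
qed


lemma adj_sym: "adj B x y = adj B y x" unfolding adj_def by auto
lemma adj_nn: "0 \<le> adj B x y" unfolding adj_def by auto
lemma ind_nn: "0 \<le> ind b x" unfolding ind_def by auto

definition FF :: "nat set \<Rightarrow> nat \<Rightarrow> nat \<Rightarrow> nat \<Rightarrow> nat \<Rightarrow> real" where
  "FF b x y z w = ind b w*ind b x*ind b y + ind b x*ind b y*ind b z + ind b y*ind b z*ind b w + ind b z*ind b w*ind b x"

lemma FF_nn: "0 \<le> FF b x y z w" unfolding FF_def by (simp add: ind_nn)

lemma pointwise:
  assumes ip: "is_IPPS 2 4 X B" and fin: "finite B"
  shows "adj B x y * adj B y z * (adj B x w * adj B w z) \<le> of_bool (x = z) + of_bool (y = w) + (\<Sum>b\<in>B. FF b x y z w)"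
proof (cases "x = z \<or> y = w")
  case True
  have "adj B x y * adj B y z * (adj B x w * adj B w z) \<le> 1" unfolding adj_def by auto
  moreover have "0 \<le> (\<Sum>b\<in>B. FF b x y z w)" by (rule sum_nonneg) (simp add: FF_nn)
  ultimately show ?thesis using True by auto
next
  case False
  show ?thesis
  proof (cases "adj B x y = 1 \<and> adj B y z = 1 \<and> adj B x w = 1 \<and> adj B w z = 1")
    case True
    then have e: "x \<noteq> y" "y \<noteq> z" "x \<noteq> w" "w \<noteq> z" "\<exists>b\<in>B. x \<in> b \<and> y \<in> b" "\<exists>b\<in>B. y \<in> b \<and> z \<in> b"
      "\<exists>b\<in>B. z \<in> b \<and> w \<in> b" "\<exists>b\<in>B. w \<in> b \<and> x \<in> b"
      unfolding adj_def by (auto split: if_splits)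
    then obtain b1 b2 b3 b4 where bs: "b1 \<in> B" "x \<in> b1" "y \<in> b1" "b2 \<in> B" "y \<in> b2" "z \<in> b2"
      "b3 \<in> B" "z \<in> b3" "w \<in> b3" "b4 \<in> B" "w \<in> b4" "x \<in> b4" by metis
    have "\<exists>b\<in>B. (w \<in> b \<and> x \<in> b \<and> y \<in> b) \<or> (x \<in> b \<and> y \<in> b \<and> z \<in> b)
               \<or> (y \<in> b \<and> z \<in> b \<and> w \<in> b) \<or> (z \<in> b \<and> w \<in> b \<and> x \<in> b)"
      by (rule cycle[OF ip, of x z y w b1 b2 b3 b4]) (use False e bs in auto)
    then obtain b where b: "b \<in> B" and
      bb: "(w \<in> b \<and> x \<in> b \<and> y \<in> b) \<or> (x \<in> b \<and> y \<in> b \<and> z \<in> b)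
               \<or> (y \<in> b \<and> z \<in> b \<and> w \<in> b) \<or> (z \<in> b \<and> w \<in> b \<and> x \<in> b)" by blast
    have "1 \<le> FF b x y z w" using bb unfolding FF_def ind_def by auto
    also have "FF b x y z w \<le> (\<Sum>b\<in>B. FF b x y z w)"
      by (rule member_le_sum) (use b fin in \<open>auto simp: FF_nn\<close>)
    finally have "1 \<le> (\<Sum>b\<in>B. FF b x y z w)" .
    then show ?thesis using True \<open>\<not> (x = z \<or> y = w)\<close> by simp
  next
    case False
    then have "adj B x y * adj B y z * (adj B x w * adj B w z) = 0" unfolding adj_def by auto
    moreover have "0 \<le> (\<Sum>b\<in>B. FF b x y z w)" by (rule sum_nonneg) (simp add: FF_nn)
    ultimately show ?thesis using \<open>\<not> (x = z \<or> y = w)\<close> by auto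
  qed
qed

lemma FFsum:
  assumes "\<And>b. b \<in> B \<Longrightarrow> (\<Sum>a<v. ind b a) = 4"
  shows "(\<Sum>x<v. \<Sum>z<v. \<Sum>y<v. \<Sum>w<v. \<Sum>b\<in>B. FF b x y z w) = 256 * real v * real (card B)"
proof -
  have "(\<Sum>x<v. \<Sum>z<v. \<Sum>y<v. \<Sum>w<v. \<Sum>b\<in>B. FF b x y z w) = (\<Sum>b\<in>B. \<Sum>x<v. \<Sum>z<v. \<Sum>y<v. \<Sum>w<v. FF b x y z w)"
    by (simp only: sum.swap[where B=B])
  also have "\<dots> = (\<Sum>b\<in>B. 256 * real v)"
  proof (rule sum.cong[OF refl])
    fix b assume "b \<in> B"
    then have s: "(\<Sum>a<v. ind b a) = 4" by (rule assms)
    show "(\<Sum>x<v. \<Sum>z<v. \<Sum>y<v. \<Sum>w<v. FF b x y z w) = 256 * real v"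
      unfolding FF_def
      by (simp add: sum.distrib sum_distrib_left[symmetric] sum_distrib_right[symmetric] s)
  qed
  finally show ?thesis by simp
qed


lemma CS: "(\<Sum>i<n. f i)^2 \<le> real n * (\<Sum>i<n. (f i)^2)"
  using sum_squared_le_sum_of_squares[of f "{..<n}"] by (simp add: mult.commute)

lemma bound:
  assumes ip: "is_IPPS 2 4 {..<v} B"
  shows "(real (card B))^4 \<le> 2 * real v^7 + 256 * real v^5 * real (card B)"
proof -
  let ?X = "{..<v}"
  let ?N = "real (card B)"
  have blocks: "\<And>b. b \<in> B \<Longrightarrow> b \<subseteq> ?X \<and> card b = 4"
    using ip unfolding is_IPPS_def by auto
  have finB: "finite B"
    by (rule finite_subset[of _ "Pow ?X"]) (use blocks in auto)
  have s4: "\<And>b. b \<in> B \<Longrightarrow> (\<Sum>a<v. ind b a) = 4"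
  proof -
    fix b assume "b \<in> B"
    then have "b \<subseteq> ?X" "card b = 4" using blocks by auto
    then have "?X \<inter> {a. a \<in> b} = b" by auto
    then show "(\<Sum>a<v. ind b a) = 4" unfolding ind_def using \<open>card b = 4\<close> by simp
  qed
  define D where "D y = (\<Sum>x<v. adj B x y)" for y
  define S where "S = (\<Sum>y<v. D y)"
  define c where "c x z = (\<Sum>y<v. adj B x y * adj B y z)" for x z
  define C where "C = (\<Sum>x<v. \<Sum>z<v. c x z)"
  define H where "H = (\<Sum>x<v. \<Sum>z<v. (c x z)^2)"
  have NS: "?N \<le> S"
  proof -
    define f where "f b = (SOME p. fst p \<in> b \<and> snd p \<in> b \<and> fst p \<noteq> snd p \<and>
        (\<forall>b'\<in>B. fst p \<in> b' \<and> snd p \<in> b' \<longrightarrow> b' = b))" for b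
    have fp: "fst (f b) \<in> b \<and> snd (f b) \<in> b \<and> fst (f b) \<noteq> snd (f b) \<and>
        (\<forall>b'\<in>B. fst (f b) \<in> b' \<and> snd (f b) \<in> b' \<longrightarrow> b' = b)" if bB: "b \<in> B" for b
    proof -
      obtain x y where "x \<in> b \<and> y \<in> b \<and> x \<noteq> y \<and> (\<forall>b'\<in>B. x \<in> b' \<and> y \<in> b' \<longrightarrow> b' = b)"
        using private_pair[OF ip bB] by blast
      then have "\<exists>p. fst p \<in> b \<and> snd p \<in> b \<and> fst p \<noteq> snd p \<and>
        (\<forall>b'\<in>B. fst p \<in> b' \<and> snd p \<in> b' \<longrightarrow> b' = b)" by (intro exI[of _ "(x,y)"]) auto
      then show ?thesis unfolding f_def by (rule someI_ex)
    qed
    have inj: "inj_on f B"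
    proof (rule inj_onI)
      fix b b' assume "b \<in> B" "b' \<in> B" "f b = f b'"
      then show "b = b'" using fp[of b] fp[of b'] by metis
    qed
    have sub: "f ` B \<subseteq> ?X \<times> ?X"
    proof
      fix p assume "p \<in> f ` B"
      then obtain b where b: "b \<in> B" "p = f b" by blast
      then have "fst p \<in> b" "snd p \<in> b" using fp[of b] by auto
      then show "p \<in> ?X \<times> ?X" using blocks[of b] b(1) by (cases p) auto
    qed
    have "?N = real (card (f ` B))" using inj by (simp add: card_image)
    also have "\<dots> = (\<Sum>p\<in>f ` B. adj B (fst p) (snd p))"
    proof -
      have "\<And>p. p \<in> f ` B \<Longrightarrow> adj B (fst p) (snd p) = 1"
      proof -
        fix p assume "p \<in> f ` B"
        then obtain b where b: "b \<in> B" "p = f b" by blast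
        then show "adj B (fst p) (snd p) = 1" using fp[of b] unfolding adj_def by auto
      qed
      then show ?thesis by simp
    qed
    also have "\<dots> \<le> (\<Sum>p\<in>?X \<times> ?X. adj B (fst p) (snd p))"
      by (rule sum_mono2) (use sub in \<open>auto simp: adj_nn\<close>)
    also have "\<dots> = (\<Sum>x<v. \<Sum>y<v. adj B x y)"
      by (simp add: sum.cartesian_product case_prod_unfold)
    also have "\<dots> = S" unfolding S_def D_def by (rule sum.swap)
    finally show ?thesis .
  qed
  have S_nn: "0 \<le> ?N" by simp
  have CD: "C = (\<Sum>y<v. (D y)^2)"
  proof -
    have "C = (\<Sum>x<v. \<Sum>z<v. \<Sum>y<v. adj B x y * adj B y z)" unfolding C_def c_def by simp
    also have "\<dots> = (\<Sum>x<v. \<Sum>y<v. \<Sum>z<v. adj B x y * adj B y z)"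
      by (rule sum.cong[OF refl], rule sum.swap)
    also have "\<dots> = (\<Sum>y<v. \<Sum>x<v. \<Sum>z<v. adj B x y * adj B y z)"
      by (rule sum.swap)
    also have "\<dots> = (\<Sum>y<v. \<Sum>x<v. \<Sum>z<v. adj B x y * adj B z y)"
      by (intro sum.cong refl) (metis adj_sym)
    also have "\<dots> = (\<Sum>y<v. (D y)^2)"
      unfolding D_def power2_eq_square by (simp add: sum_product)
    finally show ?thesis .
  qed
  have c1: "S^2 \<le> real v * C" unfolding S_def CD by (rule CS)
  have c2: "C^2 \<le> real v^2 * H"
  proof -
    have "C^2 \<le> real v * (\<Sum>x<v. (\<Sum>z<v. c x z)^2)" unfolding C_def by (rule CS)
    also have "\<dots> \<le> real v * (\<Sum>x<v. real v * (\<Sum>z<v. (c x z)^2))"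
      by (intro mult_left_mono sum_mono CS) auto
    also have "\<dots> = real v^2 * H" unfolding H_def
      by (simp add: sum_distrib_left power2_eq_square mult.assoc)
    finally show ?thesis .
  qed
  have H_up: "H \<le> 2 * real v^3 + 256 * real v * ?N"
  proof -
    have "H = (\<Sum>x<v. \<Sum>z<v. \<Sum>y<v. \<Sum>w<v. adj B x y * adj B y z * (adj B x w * adj B w z))"
      unfolding H_def c_def power2_eq_square by (simp add: sum_product)
    also have "\<dots> \<le> (\<Sum>x<v. \<Sum>z<v. \<Sum>y<v. \<Sum>w<v. of_bool (x = z) + of_bool (y = w) + (\<Sum>b\<in>B. FF b x y z w))"
      by (intro sum_mono pointwise[OF ip finB])
    also have "\<dots> = (\<Sum>x<v. \<Sum>z<v. \<Sum>y<v. \<Sum>w<v. of_bool (x = z)::real)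
        + (\<Sum>x<v. \<Sum>z<v. \<Sum>y<v. \<Sum>w<v. of_bool (y = w)::real)
        + (\<Sum>x<v. \<Sum>z<v. \<Sum>y<v. \<Sum>w<v. \<Sum>b\<in>B. FF b x y z w)"
      by (simp only: sum.distrib)
    also have "(\<Sum>x<v. \<Sum>z<v. \<Sum>y<v. \<Sum>w<v. of_bool (x = z)::real) = real v^3"
    proof -
      have one: "(\<Sum>z<v. of_bool (x = z)::real) = of_bool (x < v)" for x
        by (cases "x < v") auto
      show ?thesis by (simp add: sum_distrib_left[symmetric] power3_eq_cube one)
    qed
    also have "(\<Sum>x<v. \<Sum>z<v. \<Sum>y<v. \<Sum>w<v. of_bool (y = w)::real) = real v^3"
    proof -
      have one: "(\<Sum>z<v. of_bool (x = z)::real) = of_bool (x < v)" for x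
        by (cases "x < v") auto
      show ?thesis by (simp add: sum_distrib_left[symmetric] power3_eq_cube one)
    qed
    also have "(\<Sum>x<v. \<Sum>z<v. \<Sum>y<v. \<Sum>w<v. \<Sum>b\<in>B. FF b x y z w) = 256 * real v * ?N"
      by (rule FFsum[OF s4])
    finally show ?thesis by simp
  qed
  have "?N^4 \<le> S^4" using NS by (intro power_mono) auto
  also have "S^4 = (S^2)^2" by simp
  also have "\<dots> \<le> (real v * C)^2"
    using c1 by (intro power_mono) auto
  also have "\<dots> = real v^2 * C^2" by (simp add: power_mult_distrib)
  also have "\<dots> \<le> real v^2 * (real v^2 * H)" using c2 by (intro mult_left_mono) auto
  also have "\<dots> \<le> real v^2 * (real v^2 * (2 * real v^3 + 256 * real v * ?N))"
    using H_up by (intro mult_left_mono) auto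
  also have "\<dots> = 2 * real v^7 + 256 * real v^5 * ?N" by (simp add: algebra_simps flip: power_add power_Suc)
  finally show ?thesis .
qed


lemma empty_IPPS: "is_IPPS 2 4 X {}"
  unfolding is_IPPS_def covering_families_def by auto

lemma I_attained: "\<exists>B. is_IPPS 2 4 {..<v} B \<and> card B = I_IPPS 2 4 v"
proof -
  let ?S = "{card B | B :: nat set set. is_IPPS 2 4 {..<v} B}"
  have "?S \<subseteq> {..card (Pow {..<v::nat})}"
  proof
    fix n assume "n \<in> ?S"
    then obtain B :: "nat set set" where B: "is_IPPS 2 4 {..<v} B" "n = card B" by blast
    then have "B \<subseteq> Pow {..<v}" unfolding is_IPPS_def by auto
    then have "card B \<le> card (Pow {..<v::nat})"
      by (intro card_mono) auto
    then show "n \<in> {..card (Pow {..<v::nat})}" using B by simp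
  qed
  then have fin: "finite ?S" by (rule finite_subset) simp
  have ne: "?S \<noteq> {}" using empty_IPPS by blast
  have "I_IPPS 2 4 v \<in> ?S" unfolding I_IPPS_def using Max_in[OF fin ne] .
  then show ?thesis by auto
qed

theorem theorem4:
  shows "\<forall>\<epsilon>::real. \<epsilon> > 0 \<longrightarrow>
           (\<exists>v0::nat. \<forall>v::nat. v > v0 \<longrightarrow> real (I_IPPS 2 4 v) < \<epsilon> * (real v)^2)"
proof (intro allI impI)
  fix \<epsilon> :: real assume ep: "\<epsilon> > 0"
  define K where "K = 2 / \<epsilon> + 256"
  have "2 / \<epsilon> > 0" using ep by simp
  then have Kpos: "K > 0" unfolding K_def by linarith
  define v0 where "v0 = nat \<lceil>K / \<epsilon>^3\<rceil>"
  show "\<exists>v0::nat. \<forall>v::nat. v > v0 \<longrightarrow> real (I_IPPS 2 4 v) < \<epsilon> * (real v)^2"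
  proof (intro exI allI impI)
    fix v :: nat assume vv: "v > v0"
    obtain B where ip: "is_IPPS 2 4 {..<v} B" and cB: "card B = I_IPPS 2 4 v"
      using I_attained by blast
    define N where "N = real (card B)"
    have bd: "N^4 \<le> 2 * real v^7 + 256 * real v^5 * N" unfolding N_def by (rule bound[OF ip])
    have vK: "real v > K / \<epsilon>^3"
    proof -
      have "K / \<epsilon>^3 \<le> real v0" unfolding v0_def by linarith
      then show ?thesis using vv by linarith
    qed
    have vpos: "real v > 0" using vK Kpos ep by (smt (verit) divide_pos_pos zero_less_power)
    show "real (I_IPPS 2 4 v) < \<epsilon> * (real v)^2"
    proof (rule ccontr)
      assume "\<not> ?thesis"
      then have ge: "\<epsilon> * real v^2 \<le> N" unfolding N_def cB by simp
      have Npos: "N > 0" using ge ep vpos by (smt (verit) mult_pos_pos zero_less_power)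
      have "2 * real v^7 = 2 / \<epsilon> * real v^5 * (\<epsilon> * real v^2)"
        using ep by (simp add: field_simps flip: power_add)
      also have "\<dots> \<le> 2 / \<epsilon> * real v^5 * N"
        using ge ep by (intro mult_left_mono) auto
      finally have "N^4 \<le> K * real v^5 * N" using bd unfolding K_def by (simp add: algebra_simps)
      moreover have "N^4 = N^3 * N" by (simp add: numeral_eq_Suc)
      ultimately have "N^3 * N \<le> (K * real v^5) * N" by simp
      then have N3: "N^3 \<le> K * real v^5" using Npos by simp
      have "(\<epsilon> * real v^2)^3 \<le> N^3" using ge ep by (intro power_mono) auto
      moreover have "(\<epsilon> * real v^2)^3 = \<epsilon>^3 * real v * real v^5"
        by (simp add: power_mult_distrib numeral_eq_Suc)
      ultimately have "\<epsilon>^3 * real v * real v^5 \<le> K * real v^5" using N3 by simp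
      then have "\<epsilon>^3 * real v \<le> K" using vpos by simp
      moreover have "K < \<epsilon>^3 * real v" using vK ep by (simp add: field_simps)
      ultimately show False by simp
    qed
  qed
qed

end
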